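(* Let $G=(V,E)$ be an undirected graph, let $K$ be the set of in-degree vectors of all orientations of $G$, and let $C_1\subset\dots\subset C_q=V$, $\{S_1,\dots,S_q\}$ and $\beta_1>\dots>\beta_q$ be the canonical chain, canonical partition and essential value-sequence of $K$. An orientation $D$ of $G$ is decreasingly minimal if and only if $\varrho_D(C_i)=0$ for each $i=1,\dots,q$ and $\beta_i-1\le\varrho_D(v)\le\beta_i$ for every node $v\in S_i$ $(i=1,\dots,q)$.
   Context: $\varrho_D(v)$ is the number of arcs of $D$ with head $v$, and $\varrho_D(X)$ the number of arcs entering $X$ (head in $X$, tail outside). The in-degree vector of $D$ is $(\varrho_D(v))_{v\in V}$. An orientation is decreasingly minimal if its in-degree vector is decreasingly minimal in $K$ (largest component as small as possible, then the second largest, etc.). Canonical objects: take a decreasingly minimal $m\in K$; for $u\in V$ let $T_m(u)=\{s\in V: m+\chi_s-\chi_u\in K\}$. Put $\beta_1=\max_v m(v)$, $C_1=\bigcup\{T_m(u):m(u)=\beta_1\}$; for $i\ge2$, while $C_{i-1}\ne V$, put $\beta_i=\max\{m(s):s\in V-C_{i-1}\}$, $C_i=\bigcup\{T_m(u):m(u)\ge\beta_i\}$; stop when $C_q=V$; $S_i=C_i-C_{i-1}$ with $C_0=\emptyset$. These objects are known not to depend on the choice of $m$. *)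

theory Defs
  imports Main "HOL-Library.Multiset"
begin

text \<open>An undirected graph G = (V,E) (parallel edges and loops allowed) is given by a
finite vertex set V, a finite edge set E and an endpoint map ends; edge e joins
fst (ends e) and snd (ends e).\<close>

definition is_orientation :: "'e set \<Rightarrow> ('e \<Rightarrow> 'v \<times> 'v) \<Rightarrow> ('e \<Rightarrow> 'v) \<Rightarrow> bool" where
  "is_orientation E ends h \<longleftrightarrow> (\<forall>e\<in>E. h e = fst (ends e) \<or> h e = snd (ends e))"

definition tail_of :: "('e \<Rightarrow> 'v \<times> 'v) \<Rightarrow> ('e \<Rightarrow> 'v) \<Rightarrow> 'e \<Rightarrow> 'v" where
  "tail_of ends h e = (if h e = fst (ends e) then snd (ends e) else fst (ends e))"

definition indeg :: "'e set \<Rightarrow> ('e \<Rightarrow> 'v) \<Rightarrow> 'v \<Rightarrow> int" where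
  "indeg E h v = int (card {e\<in>E. h e = v})"

definition indeg_set :: "'e set \<Rightarrow> ('e \<Rightarrow> 'v \<times> 'v) \<Rightarrow> ('e \<Rightarrow> 'v) \<Rightarrow> 'v set \<Rightarrow> nat" where
  "indeg_set E ends h X = card {e\<in>E. h e \<in> X \<and> tail_of ends h e \<notin> X}"

definition indeg_vec :: "'v set \<Rightarrow> 'e set \<Rightarrow> ('e \<Rightarrow> 'v) \<Rightarrow> 'v \<Rightarrow> int" where
  "indeg_vec V E h = (\<lambda>v. if v \<in> V then indeg E h v else 0)"

definition indeg_vectors :: "'v set \<Rightarrow> 'e set \<Rightarrow> ('e \<Rightarrow> 'v \<times> 'v) \<Rightarrow> ('v \<Rightarrow> int) set" where
  "indeg_vectors V E ends = {indeg_vec V E h | h. is_orientation E ends h}"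

definition dec_seq :: "'v set \<Rightarrow> ('v \<Rightarrow> int) \<Rightarrow> int list" where
  "dec_seq V m = rev (sorted_list_of_multiset (image_mset m (mset_set V)))"

definition dec_smaller :: "'v set \<Rightarrow> ('v \<Rightarrow> int) \<Rightarrow> ('v \<Rightarrow> int) \<Rightarrow> bool" where
  "dec_smaller V m' m \<longleftrightarrow> (dec_seq V m', dec_seq V m) \<in> lexord {(a, b). a < b}"

definition dec_min :: "'v set \<Rightarrow> ('v \<Rightarrow> int) set \<Rightarrow> ('v \<Rightarrow> int) \<Rightarrow> bool" where
  "dec_min V K m \<longleftrightarrow> m \<in> K \<and> \<not> (\<exists>m'\<in>K. dec_smaller V m' m)"

definition Tm :: "'v set \<Rightarrow> ('v \<Rightarrow> int) set \<Rightarrow> ('v \<Rightarrow> int) \<Rightarrow> 'v \<Rightarrow> 'v set" where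
  "Tm V K m u = {s\<in>V. (\<lambda>v. m v + (if v = s then 1 else 0) - (if v = u then 1 else 0)) \<in> K}"

text \<open>canon_C V K m i = C_i (C_0 = {}); beta_i = max m over V - C_(i-1);
C_i = union of T_m(u) over m(u) \<ge> beta_i  (for i = 1, since beta_1 = max m,
this is the union over m(u) = beta_1)\<close>
fun canon_C :: "'v set \<Rightarrow> ('v \<Rightarrow> int) set \<Rightarrow> ('v \<Rightarrow> int) \<Rightarrow> nat \<Rightarrow> 'v set" where
  "canon_C V K m 0 = {}"
| "canon_C V K m (Suc i) =
     (let b = Max (m ` (V - canon_C V K m i)) in \<Union>{Tm V K m u | u. u \<in> V \<and> b \<le> m u})"

definition canon_beta :: "'v set \<Rightarrow> ('v \<Rightarrow> int) set \<Rightarrow> ('v \<Rightarrow> int) \<Rightarrow> nat \<Rightarrow> int" where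
  "canon_beta V K m i = Max (m ` (V - canon_C V K m (i - 1)))"

definition canon_q :: "'v set \<Rightarrow> ('v \<Rightarrow> int) set \<Rightarrow> ('v \<Rightarrow> int) \<Rightarrow> nat" where
  "canon_q V K m = (LEAST q. canon_C V K m q = V)"

definition canon_S :: "'v set \<Rightarrow> ('v \<Rightarrow> int) set \<Rightarrow> ('v \<Rightarrow> int) \<Rightarrow> nat \<Rightarrow> 'v set" where
  "canon_S V K m i = canon_C V K m i - canon_C V K m (i - 1)"

end

theory Submission
  imports Defs "HOL-Library.Multiset"
begin

lemma count_img:
  assumes "finite S"
  shows "count (image_mset f (mset_set S)) y = card {w\<in>S. f w = y}"
proof -
  have "count (image_mset f (mset_set S)) y = (\<Sum>w\<in>f -` {y} \<inter> S. count (mset_set S) w)"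
    using assms by (simp add: count_image_mset)
  also have "\<dots> = (\<Sum>w\<in>f -` {y} \<inter> S. 1)"
    using assms by (intro sum.cong) auto
  also have "\<dots> = card (f -` {y} \<inter> S)" by simp
  also have "f -` {y} \<inter> S = {w\<in>S. f w = y}" by auto
  finally show ?thesis .
qed

lemma desc_split:
  fixes L :: "'a::linorder list"
  assumes "sorted_wrt (\<ge>) L"
  shows "L = filter (\<lambda>y. y > t) L @ filter (\<lambda>y. t = y) L @ filter (\<lambda>y. y < t) L"
  using assms
proof (induction L)
  case Nil
  then show ?case by simp
next
  case (Cons x L)
  then have IH: "L = filter (\<lambda>y. y > t) L @ filter (\<lambda>y. t = y) L @ filter (\<lambda>y. y < t) L"
    and le: "\<forall>y\<in>set L. y \<le> x" by auto
  consider "x > t" | "x = t" | "x < t" by fastforce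
  then show ?case
  proof cases
    case 1
    have "x # L = x # (filter (\<lambda>y. y > t) L @ filter (\<lambda>y. t = y) L @ filter (\<lambda>y. y < t) L)"
      using IH by (rule arg_cong)
    moreover have "t \<noteq> x" "\<not> x < t" using 1 by auto
    ultimately show ?thesis by simp
  next
    case 2
    have "filter (\<lambda>y. y > t) L = []" using le 2 by (auto simp: filter_empty_conv)
    then show ?thesis using IH[symmetric] 2 by simp
  next
    case 3
    have a: "filter (\<lambda>y. y > t) L = []" "filter (\<lambda>y. t = y) L = []"
      using le 3 by (auto simp: filter_empty_conv)
    have "filter (\<lambda>y. y < t) L = L" using le 3 by (auto simp: filter_id_conv)
    moreover have "\<not> t < x" "t \<noteq> x" using 3 by auto
    ultimately show ?thesis using a by simp
  qed
qed

lemma desc_unique: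
  fixes xs ys :: "'a::linorder list"
  assumes "sorted_wrt (\<ge>) xs" "sorted_wrt (\<ge>) ys" "mset xs = mset ys"
  shows "xs = ys"
proof -
  have s1: "sorted (rev xs)" "sorted (rev ys)" using assms
    by (simp_all add: sorted_wrt_rev sorted_wrt_rev)
  have "sort (rev ys) = rev xs" using assms(3) s1(1) by (intro properties_for_sort) simp
  moreover have "sort (rev ys) = rev ys" using s1(2) by (simp add: sorted_sort_id)
  ultimately show ?thesis by simp
qed

definition dsort :: "int multiset \<Rightarrow> int list" where
  "dsort A = rev (sorted_list_of_multiset A)"

lemma dsort_sorted: "sorted_wrt (\<ge>) (dsort A)"
  unfolding dsort_def sorted_wrt_rev by (simp add: sorted_wrt_rev)

lemma dsort_mset[simp]: "mset (dsort A) = A"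
  unfolding dsort_def by simp

lemma lex_threshold:
  fixes A B :: "int multiset"
  assumes sz: "size A = size B"
    and above: "\<forall>y>t. count A y = count B y"
    and at: "count A t < count B t"
  shows "(dsort A, dsort B) \<in> lexord {(a, b). a < b}"
proof -
  let ?La = "dsort A" and ?Lb = "dsort B"
  have sa: "?La = filter (\<lambda>y. y > t) ?La @ filter (\<lambda>y. t = y) ?La @ filter (\<lambda>y. y < t) ?La"
    by (rule desc_split[OF dsort_sorted])
  have sb: "?Lb = filter (\<lambda>y. y > t) ?Lb @ filter (\<lambda>y. t = y) ?Lb @ filter (\<lambda>y. y < t) ?Lb"
    by (rule desc_split[OF dsort_sorted])
  have P: "filter (\<lambda>y. y > t) ?La = filter (\<lambda>y. y > t) ?Lb"
  proof (rule desc_unique)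
    show "sorted_wrt (\<ge>) (filter (\<lambda>y. y > t) ?La)"
      using dsort_sorted by (rule sorted_wrt_filter)
    show "sorted_wrt (\<ge>) (filter (\<lambda>y. y > t) ?Lb)"
      using dsort_sorted by (rule sorted_wrt_filter)
    show "mset (filter (\<lambda>y. y > t) ?La) = mset (filter (\<lambda>y. y > t) ?Lb)"
      by (auto intro!: multiset_eqI simp: above)
  qed
  have ra: "filter (\<lambda>y. t = y) ?La = replicate (count A t) t"
    using replicate_count_mset_eq_filter_eq[of ?La t] by simp
  have rb: "filter (\<lambda>y. t = y) ?Lb = replicate (count B t) t"
    using replicate_count_mset_eq_filter_eq[of ?Lb t] by simp
  define P' where "P' = filter (\<lambda>y. y > t) ?La"
  define Ra where "Ra = filter (\<lambda>y. y < t) ?La"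
  define Rb where "Rb = filter (\<lambda>y. y < t) ?Lb"
  have eA: "?La = P' @ replicate (count A t) t @ Ra" unfolding P'_def Ra_def ra[symmetric] by (rule sa)
  have eB: "?Lb = P' @ replicate (count B t) t @ Rb" unfolding P'_def Rb_def rb[symmetric] P by (rule sb)
  have "length ?La = length ?Lb"
    by (metis dsort_mset size_mset sz)
  then have "length Ra > 0" using eA eB at by (cases Ra) auto
  then obtain y Ra' where Ray: "Ra = y # Ra'" by (cases Ra) auto
  have "y < t" using Ray unfolding Ra_def by (metis filter_eq_ConsD)
  have eB': "?Lb = (P' @ replicate (count A t) t) @ t # (replicate (count B t - count A t - 1) t @ Rb)"
  proof -
    have c: "count B t = count A t + Suc (count B t - count A t - 1)" using at by simp
    have "replicate (count B t) t = replicate (count A t + Suc (count B t - count A t - 1)) t"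
      using c by (rule arg_cong)
    also have "\<dots> = replicate (count A t) t @ t # replicate (count B t - count A t - 1) t"
      by (simp only: replicate_add replicate_Suc)
    finally have "replicate (count B t) t = replicate (count A t) t @ t # replicate (count B t - count A t - 1) t" .
    then show ?thesis using eB by simp
  qed
  have eA': "?La = (P' @ replicate (count A t) t) @ y # Ra'" using eA Ray by simp
  show ?thesis unfolding lexord_def using eA' eB' \<open>y < t\<close> by blast
qed


lemma dec_seq_dsort: "dec_seq V m = dsort (image_mset m (mset_set V))"
  unfolding dec_seq_def dsort_def by simp

lemma dec_smaller_move:
  assumes fin: "finite V" and uv: "u \<in> V" "v \<in> V" "u \<noteq> v" and gap: "m v + 2 \<le> m u"
  shows "dec_smaller V (\<lambda>w. m w + (if w = v then 1 else 0) - (if w = u then 1 else 0)) m"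
proof -
  define m' where "m' = (\<lambda>w. m w + (if w = v then 1 else 0) - (if w = u then 1 else 0))"
  let ?A = "image_mset m' (mset_set V)" and ?B = "image_mset m (mset_set V)"
  have "(dsort ?A, dsort ?B) \<in> lexord {(a, b). a < b}"
  proof (rule lex_threshold[where t = "m u"])
    show "size ?A = size ?B" by simp
    show "\<forall>y>m u. count ?A y = count ?B y"
    proof (intro allI impI)
      fix y assume y: "y > m u"
      have "{w\<in>V. m' w = y} = {w\<in>V. m w = y}"
        using y gap uv unfolding m'_def by auto
      then show "count ?A y = count ?B y" by (simp add: count_img fin)
    qed
    have "{w\<in>V. m' w = m u} = {w\<in>V. m w = m u} - {u}"
      using gap uv unfolding m'_def by auto
    moreover have "u \<in> {w\<in>V. m w = m u}" using uv by simp
    moreover have "finite {w\<in>V. m w = m u}" using fin by simp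
    ultimately have "card {w\<in>V. m' w = m u} < card {w\<in>V. m w = m u}"
      by (metis card_Diff1_less)
    then show "count ?A (m u) < count ?B (m u)" by (simp add: count_img fin)
  qed
  then show ?thesis unfolding dec_smaller_def dec_seq_dsort m'_def by simp
qed

definition step :: "'e set \<Rightarrow> ('e \<Rightarrow> 'v \<times> 'v) \<Rightarrow> ('e \<Rightarrow> 'v) \<Rightarrow> 'v \<Rightarrow> 'v \<Rightarrow> bool" where
  "step E ends h a b \<longleftrightarrow> (\<exists>e\<in>E. h e = b \<and> tail_of ends h e = a \<and> a \<noteq> b)"

locale graph =
  fixes V :: "'v set" and E :: "'e set" and ends :: "'e \<Rightarrow> 'v \<times> 'v"
  assumes finV: "finite V" and finE: "finite E"
    and ends_in: "\<forall>e\<in>E. fst (ends e) \<in> V \<and> snd (ends e) \<in> V"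
begin

lemma head_in: "is_orientation E ends h \<Longrightarrow> e \<in> E \<Longrightarrow> h e \<in> V"
  using ends_in unfolding is_orientation_def by auto

lemma tail_in: "e \<in> E \<Longrightarrow> tail_of ends h e \<in> V"
  using ends_in unfolding tail_of_def by auto

lemma vec_in: "is_orientation E ends h \<Longrightarrow> indeg_vec V E h \<in> indeg_vectors V E ends"
  unfolding indeg_vectors_def by blast

lemma flip:
  assumes or: "is_orientation E ends h" and e: "e \<in> E" "h e = b" "tail_of ends h e = a" "a \<noteq> b"
  shows "is_orientation E ends (h(e := a))"
    and "tail_of ends (h(e := a)) e = b"
    and "\<And>e'. e' \<noteq> e \<Longrightarrow> tail_of ends (h(e := a)) e' = tail_of ends h e'"
    and "indeg_vec V E (h(e := a)) = (\<lambda>w. indeg_vec V E h w + (if w = a then 1 else 0) - (if w = b then 1 else 0))"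
proof -
  have ab: "(a = fst (ends e) \<and> b = snd (ends e)) \<or> (a = snd (ends e) \<and> b = fst (ends e))"
    using or e unfolding is_orientation_def tail_of_def by (auto split: if_splits)
  show "is_orientation E ends (h(e := a))"
    using or ab unfolding is_orientation_def by auto
  show "tail_of ends (h(e := a)) e = b"
    using ab e(4) unfolding tail_of_def by auto
  show "\<And>e'. e' \<noteq> e \<Longrightarrow> tail_of ends (h(e := a)) e' = tail_of ends h e'"
    unfolding tail_of_def by auto
  have aV: "a \<in> V" and bV: "b \<in> V" using e tail_in head_in[OF or] by auto
  show "indeg_vec V E (h(e := a)) = (\<lambda>w. indeg_vec V E h w + (if w = a then 1 else 0) - (if w = b then 1 else 0))"
  proof
    fix w
    have fin: "finite {e'\<in>E. h e' = w}" using finE by simp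
    show "indeg_vec V E (h(e := a)) w = indeg_vec V E h w + (if w = a then 1 else 0) - (if w = b then 1 else 0)"
    proof (cases "w = a")
      case True
      then have "{e'\<in>E. (h(e := a)) e' = w} = insert e {e'\<in>E. h e' = w}" using e by auto
      moreover have "e \<notin> {e'\<in>E. h e' = w}" using e True by auto
      ultimately show ?thesis using True aV e(4) fin unfolding indeg_vec_def indeg_def by simp
    next
      case False
      note wa = False
      show ?thesis
      proof (cases "w = b")
        case True
        then have "{e'\<in>E. (h(e := a)) e' = w} = {e'\<in>E. h e' = w} - {e}" using e wa by auto
        moreover have "e \<in> {e'\<in>E. h e' = w}" using e True by auto
        moreover have "card {e'\<in>E. h e' = w} \<ge> 1"
          using fin \<open>e \<in> {e'\<in>E. h e' = w}\<close> by (metis One_nat_def Suc_leI card_gt_0_iff empty_iff)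
        ultimately have "int (card {e'\<in>E. (h(e := a)) e' = w}) = int (card {e'\<in>E. h e' = w}) - 1"
          using fin by (simp add: of_nat_diff)
        then show ?thesis using True bV wa unfolding indeg_vec_def indeg_def by simp
      next
        case False
        then have "{e'\<in>E. (h(e := a)) e' = w} = {e'\<in>E. h e' = w}" using e wa by auto
        then show ?thesis using False wa unfolding indeg_vec_def indeg_def by simp
      qed
    qed
  qed
qed

end

context graph begin

lemma path_aux:
  assumes or: "is_orientation E ends h" and e: "e \<in> E" "h e = b" "tail_of ends h e = s" "s \<noteq> b"
  shows "(step E ends h ^^ k) a u \<Longrightarrow> a \<noteq> s \<Longrightarrow>
    (step E ends (h(e := s)) ^^ k) a u \<or> (\<exists>j<k. (step E ends h ^^ j) s u)"
proof (induction k arbitrary: a)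
  case 0
  then show ?case by simp
next
  case (Suc k)
  from relpowp_Suc_D2[OF Suc.prems(1)] obtain c where ac: "step E ends h a c" and cu: "(step E ends h ^^ k) c u"
    by blast
  from ac obtain e' where e': "e' \<in> E" "h e' = c" "tail_of ends h e' = a" "a \<noteq> c"
    unfolding step_def by blast
  have "e' \<noteq> e" using e' e Suc.prems(2) by auto
  then have st1: "step E ends (h(e := s)) a c"
    unfolding step_def using e' flip(3)[OF or e] by (intro bexI[of _ e']) auto
  show ?case
  proof (cases "c = s")
    case True
    have "k < Suc k" by simp
    then have "\<exists>j<Suc k. (step E ends h ^^ j) s u" using cu True by blast
    then show ?thesis by (rule disjI2)
  next
    case False
    from Suc.IH[OF cu False] show ?thesis
    proof
      assume "(step E ends (h(e := s)) ^^ k) c u"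
      then have "(step E ends (h(e := s)) ^^ Suc k) a u" by (rule relpowp_Suc_I2[of "step E ends (h(e := s))" a c k u, OF st1])
      then show ?thesis by (rule disjI1)
    next
      assume "\<exists>j<k. (step E ends h ^^ j) s u"
      then obtain j where "j < k" "(step E ends h ^^ j) s u" by blast
      moreover have "j < Suc k" using \<open>j < k\<close> by simp
      ultimately show ?thesis by blast
    qed
  qed
qed

lemma reverse_path:
  "is_orientation E ends h \<Longrightarrow> (step E ends h ^^ n) s u \<Longrightarrow>
   (\<lambda>w. indeg_vec V E h w + (if w = s then 1 else 0) - (if w = u then 1 else 0)) \<in> indeg_vectors V E ends"
proof (induction n arbitrary: h s rule: less_induct)
  case (less n)
  show ?case
  proof (cases n)
    case 0
    then have "s = u" using less.prems by simp
    then show ?thesis using vec_in[OF less.prems(1)] by simp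
  next
    case (Suc k)
    have pr: "(step E ends h ^^ Suc k) s u" using less.prems(2) Suc by simp
    obtain b where sb: "step E ends h s b" and bu: "(step E ends h ^^ k) b u"
      using relpowp_Suc_D2[OF pr] by blast
    from sb obtain e where e: "e \<in> E" "h e = b" "tail_of ends h e = s" "s \<noteq> b"
      unfolding step_def by blast
    have "b \<noteq> s" using e by auto
    from path_aux[OF less.prems(1) e bu this] show ?thesis
    proof
      assume p: "(step E ends (h(e := s)) ^^ k) b u"
      have kn: "k < n" using Suc by simp
      have "(\<lambda>w. indeg_vec V E (h(e := s)) w + (if w = b then 1 else 0) - (if w = u then 1 else 0)) \<in> indeg_vectors V E ends"
        by (rule less.IH[OF kn flip(1)[OF less.prems(1) e] p])
      then show ?thesis unfolding flip(4)[OF less.prems(1) e] by simp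
    next
      assume "\<exists>j<k. (step E ends h ^^ j) s u"
      then obtain j where "j < k" "(step E ends h ^^ j) s u" by blast
      moreover have "j < n" using \<open>j < k\<close> Suc by simp
      ultimately show ?thesis using less.IH[of j h s] less.prems(1) by blast
    qed
  qed
qed

end

context graph begin

definition inner :: "'v set \<Rightarrow> nat" where
  "inner X = card {e\<in>E. fst (ends e) \<in> X \<and> snd (ends e) \<in> X}"

lemma sum_indeg:
  assumes or: "is_orientation E ends h" and X: "finite X"
  shows "(\<Sum>x\<in>X. indeg E h x) = int (inner X) + int (indeg_set E ends h X)"
proof -
  have "(\<Sum>x\<in>X. indeg E h x) = int (\<Sum>x\<in>X. card {e\<in>E. h e = x})"
    unfolding indeg_def by simp
  also have "(\<Sum>x\<in>X. card {e\<in>E. h e = x}) = card (\<Union>x\<in>X. {e\<in>E. h e = x})"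
    using X finE by (intro card_UN_disjoint[symmetric]) auto
  also have "(\<Union>x\<in>X. {e\<in>E. h e = x}) = {e\<in>E. fst (ends e) \<in> X \<and> snd (ends e) \<in> X} \<union> {e\<in>E. h e \<in> X \<and> tail_of ends h e \<notin> X}"
    using or unfolding is_orientation_def tail_of_def by (auto split: if_splits)
  also have "card \<dots> = inner X + indeg_set E ends h X"
    unfolding inner_def indeg_set_def using finE
    by (intro card_Un_disjoint) (use or in \<open>auto simp: is_orientation_def tail_of_def split: if_splits\<close>)
  finally show ?thesis by simp
qed

definition closed :: "('e \<Rightarrow> 'v) \<Rightarrow> 'v set \<Rightarrow> bool" where
  "closed h X \<longleftrightarrow> (\<forall>e\<in>E. h e \<in> X \<longrightarrow> tail_of ends h e \<in> X)"

lemma closed_iff: "indeg_set E ends h X = 0 \<longleftrightarrow> closed h X"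
  unfolding indeg_set_def closed_def using finE by auto

lemma sum_move:
  assumes "finite X"
  shows "(\<Sum>x\<in>X. f x + (if x = s then 1 else 0) - (if x = u then 1 else 0)) =
    (\<Sum>x\<in>X. f x) + (if s \<in> X then 1 else 0) - (if u \<in> X then (1::int) else 0)"
  using assms by (simp add: sum.distrib sum_subtractf)

lemma hard_dir:
  assumes or: "is_orientation E ends h0" and or': "is_orientation E ends h'"
    and sV: "s \<in> V" and uV: "u \<in> V"
    and eq: "indeg_vec V E h' = (\<lambda>w. indeg_vec V E h0 w + (if w = s then 1 else 0) - (if w = u then 1 else 0))"
  shows "(step E ends h0)\<^sup>*\<^sup>* s u"
proof (rule ccontr)
  assume ns: "\<not> (step E ends h0)\<^sup>*\<^sup>* s u"
  define X where "X = {x\<in>V. (step E ends h0)\<^sup>*\<^sup>* x u}"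
  have finX: "finite X" unfolding X_def using finV by simp
  have XV: "X \<subseteq> V" unfolding X_def by auto
  have uX: "u \<in> X" unfolding X_def using uV by simp
  have sX: "s \<notin> X" unfolding X_def using ns by simp
  have cl: "closed h0 X"
    unfolding closed_def
  proof (intro ballI impI)
    fix e assume e: "e \<in> E" "h0 e \<in> X"
    show "tail_of ends h0 e \<in> X"
    proof (cases "tail_of ends h0 e = h0 e")
      case True then show ?thesis using e by simp
    next
      case False
      then have "step E ends h0 (tail_of ends h0 e) (h0 e)" unfolding step_def using e by auto
      moreover have "(step E ends h0)\<^sup>*\<^sup>* (h0 e) u" using e unfolding X_def by simp
      ultimately have "(step E ends h0)\<^sup>*\<^sup>* (tail_of ends h0 e) u" by (rule converse_rtranclp_into_rtranclp)
      then show ?thesis using tail_in[OF e(1)] unfolding X_def by simp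
    qed
  qed
  have s0: "(\<Sum>x\<in>X. indeg E h0 x) = int (inner X)"
    using sum_indeg[OF or finX] closed_iff cl by simp
  have s1: "(\<Sum>x\<in>X. indeg E h' x) \<ge> int (inner X)"
    using sum_indeg[OF or' finX] by simp
  have "(\<Sum>x\<in>X. indeg E h' x) = (\<Sum>x\<in>X. indeg E h0 x + (if x = s then 1 else 0) - (if x = u then 1 else 0))"
  proof (rule sum.cong)
    fix x assume "x \<in> X"
    then have "x \<in> V" using XV by auto
    then show "indeg E h' x = indeg E h0 x + (if x = s then 1 else 0) - (if x = u then 1 else 0)"
      using fun_cong[OF eq, of x] unfolding indeg_vec_def by simp
  qed simp
  also have "\<dots> = (\<Sum>x\<in>X. indeg E h0 x) - 1"
    using sum_move[OF finX] sX uX by simp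
  finally show False using s0 s1 by simp
qed

end

context graph begin

lemma Tm_char:
  assumes or: "is_orientation E ends h0" and uV: "u \<in> V"
  shows "Tm V (indeg_vectors V E ends) (indeg_vec V E h0) u = {s\<in>V. (step E ends h0)\<^sup>*\<^sup>* s u}"
proof
  show "Tm V (indeg_vectors V E ends) (indeg_vec V E h0) u \<subseteq> {s\<in>V. (step E ends h0)\<^sup>*\<^sup>* s u}"
  proof
    fix s assume "s \<in> Tm V (indeg_vectors V E ends) (indeg_vec V E h0) u"
    then have sV: "s \<in> V" and inK: "(\<lambda>v. indeg_vec V E h0 v + (if v = s then 1 else 0) - (if v = u then 1 else 0)) \<in> indeg_vectors V E ends"
      unfolding Tm_def by auto
    from inK obtain h' where "is_orientation E ends h'"
      "indeg_vec V E h' = (\<lambda>v. indeg_vec V E h0 v + (if v = s then 1 else 0) - (if v = u then 1 else 0))"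
      unfolding indeg_vectors_def by auto
    then show "s \<in> {s\<in>V. (step E ends h0)\<^sup>*\<^sup>* s u}" using hard_dir[OF or _ sV uV] sV by simp
  qed
next
  show "{s\<in>V. (step E ends h0)\<^sup>*\<^sup>* s u} \<subseteq> Tm V (indeg_vectors V E ends) (indeg_vec V E h0) u"
  proof
    fix s assume "s \<in> {s\<in>V. (step E ends h0)\<^sup>*\<^sup>* s u}"
    then have sV: "s \<in> V" and r: "(step E ends h0)\<^sup>*\<^sup>* s u" by auto
    from rtranclp_imp_relpowp[OF r] obtain n where "(step E ends h0 ^^ n) s u" by blast
    note sV this
    then show "s \<in> Tm V (indeg_vectors V E ends) (indeg_vec V E h0) u"
      using reverse_path[OF or] sV unfolding Tm_def by simp
  qed
qed

end

lemma canon_C_Suc: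
  "canon_C V K m (Suc i) = \<Union>{Tm V K m u | u. u \<in> V \<and> Max (m ` (V - canon_C V K m i)) \<le> m u}"
  by (simp add: Let_def)

declare canon_C.simps(2)[simp del]

locale dm = graph V E ends for V :: "'v set" and E :: "'e set" and ends +
  fixes h0 :: "'e \<Rightarrow> 'v"
  assumes or0: "is_orientation E ends h0"
    and dmin: "dec_min V (indeg_vectors V E ends) (indeg_vec V E h0)"
begin

abbreviation "K \<equiv> indeg_vectors V E ends"
abbreviation "m \<equiv> indeg_vec V E h0"
abbreviation "C \<equiv> canon_C V K m"
abbreviation "bt i \<equiv> Max (m ` (V - C i))"

lemma Tm_sub: "Tm V K m u \<subseteq> V" unfolding Tm_def by auto

lemma u_Tm: "u \<in> V \<Longrightarrow> u \<in> Tm V K m u"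
  using Tm_char[OF or0] by auto

lemma C_Suc: "C (Suc i) = \<Union>{Tm V K m u | u. u \<in> V \<and> bt i \<le> m u}"
  by (rule canon_C_Suc)

lemma C_sub: "C i \<subseteq> V"
proof (cases i)
  case 0 then show ?thesis by simp
next
  case (Suc j) show ?thesis unfolding Suc C_Suc using Tm_sub by blast
qed

lemma finC: "finite (C i)" using C_sub finV finite_subset by blast

lemma tops: "u \<in> V \<Longrightarrow> bt i \<le> m u \<Longrightarrow> u \<in> C (Suc i)"
  unfolding C_Suc using u_Tm by blast

lemma Tm_closed: "u \<in> V \<Longrightarrow> closed h0 (Tm V K m u)"
  unfolding closed_def
proof (intro ballI impI)
  fix e assume u: "u \<in> V" and e: "e \<in> E" "h0 e \<in> Tm V K m u"
  then have r: "(step E ends h0)\<^sup>*\<^sup>* (h0 e) u" using Tm_char[OF or0 u] by auto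
  show "tail_of ends h0 e \<in> Tm V K m u"
  proof (cases "tail_of ends h0 e = h0 e")
    case True then show ?thesis using e by simp
  next
    case False
    then have "step E ends h0 (tail_of ends h0 e) (h0 e)" unfolding step_def using e by auto
    then have "(step E ends h0)\<^sup>*\<^sup>* (tail_of ends h0 e) u" using r by (rule converse_rtranclp_into_rtranclp)
    then show ?thesis using Tm_char[OF or0 u] tail_in e by auto
  qed
qed

lemma C_closed: "closed h0 (C i)"
proof (cases i)
  case 0 then show ?thesis by (simp add: closed_def)
next
  case (Suc j)
  show ?thesis unfolding Suc C_Suc closed_def
  proof (intro ballI impI)
    fix e assume e: "e \<in> E" "h0 e \<in> \<Union>{Tm V K m u | u. u \<in> V \<and> bt j \<le> m u}"
    then obtain u where u: "u \<in> V" "bt j \<le> m u" "h0 e \<in> Tm V K m u" by blast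
    then have "tail_of ends h0 e \<in> Tm V K m u" using Tm_closed[OF u(1)] e(1) unfolding closed_def by blast
    then show "tail_of ends h0 e \<in> \<Union>{Tm V K m u | u. u \<in> V \<and> bt j \<le> m u}" using u by blast
  qed
qed

lemma below: "w \<in> V - C (Suc i) \<Longrightarrow> m w < bt i"
proof (rule ccontr)
  assume w: "w \<in> V - C (Suc i)" and "\<not> m w < bt i"
  then have "bt i \<le> m w" by simp
  then have "w \<in> C (Suc i)" using tops w by blast
  then show False using w by blast
qed

lemma C_mono: "C i \<noteq> V \<Longrightarrow> C i \<subseteq> C (Suc i)"
proof (cases i)
  case 0 then show ?thesis by simp
next
  case (Suc j)
  assume ne: "C i \<noteq> V"
  then have ne': "V - C (Suc j) \<noteq> {}" using C_sub Suc by blast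
  have lt: "bt (Suc j) < bt j"
    using below ne' finV by (subst Max_less_iff) auto
  show ?thesis unfolding Suc
  proof
    fix x assume "x \<in> C (Suc j)"
    then obtain u where u: "u \<in> V" "bt j \<le> m u" "x \<in> Tm V K m u"
      unfolding C_Suc[of j] by blast
    then have "bt (Suc j) \<le> m u" using lt by simp
    then show "x \<in> C (Suc (Suc j))" using u unfolding C_Suc[of "Suc j"] by blast
  qed
qed

lemma C_grow: "C i \<noteq> V \<Longrightarrow> C i \<subset> C (Suc i)"
proof -
  assume ne: "C i \<noteq> V"
  then have ne': "V - C i \<noteq> {}" using C_sub by blast
  have "bt i \<in> m ` (V - C i)" using ne' finV by (intro Max_in) auto
  then obtain w where w: "w \<in> V - C i" "m w = bt i" by (metis imageE)
  then have "w \<in> C (Suc i)" using tops by auto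
  then show ?thesis using C_mono[OF ne] w by blast
qed

lemma card_C: "(\<forall>j<i. C j \<noteq> V) \<Longrightarrow> card (C i) \<ge> i"
proof (induction i)
  case 0 then show ?case by simp
next
  case (Suc i)
  then have "card (C i) \<ge> i" by simp
  moreover have "card (C i) < card (C (Suc i))"
    using C_grow Suc.prems finC by (simp add: psubset_card_mono)
  ultimately show ?case by simp
qed

lemma ex_q: "\<exists>q. C q = V"
proof (rule ccontr)
  assume "\<not> (\<exists>q. C q = V)"
  then have "card (C (Suc (card V))) \<ge> Suc (card V)" using card_C by blast
  moreover have "card (C (Suc (card V))) \<le> card V" using C_sub finV by (simp add: card_mono)
  ultimately show False by simp
qed

definition "q = canon_q V K m"

lemma Cq: "C q = V"
  unfolding q_def canon_q_def using ex_q by (rule LeastI_ex)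

lemma C_lt_q: "j < q \<Longrightarrow> C j \<noteq> V"
  unfolding q_def canon_q_def using not_less_Least by blast

lemma m_range:
  assumes i: "i < q" and v: "v \<in> C (Suc i) - C i"
  shows "bt i - 1 \<le> m v \<and> m v \<le> bt i"
proof
  have vV: "v \<in> V" using v C_sub by blast
  show "m v \<le> bt i" using v vV finV by (intro Max_ge) auto
  from v obtain u where u: "u \<in> V" "bt i \<le> m u" "v \<in> Tm V K m u" unfolding C_Suc by blast
  show "bt i - 1 \<le> m v"
  proof (cases "v = u")
    case True then show ?thesis using u by simp
  next
    case False
    have inK: "(\<lambda>w. m w + (if w = v then 1 else 0) - (if w = u then 1 else 0)) \<in> K"
      using u(3) unfolding Tm_def by simp
    show ?thesis
    proof (rule ccontr)
      assume "\<not> bt i - 1 \<le> m v"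
      then have "m v + 2 \<le> m u" using u by simp
      then have "dec_smaller V (\<lambda>w. m w + (if w = v then 1 else 0) - (if w = u then 1 else 0)) m"
        using dec_smaller_move[OF finV u(1) vV] False by simp
      then show False using dmin inK unfolding dec_min_def by blast
    qed
  qed
qed

end

lemma sum_range:
  fixes f :: "'v \<Rightarrow> int"
  assumes S: "finite S" and r: "\<forall>v\<in>S. b - 1 \<le> f v \<and> f v \<le> b"
  shows "(\<Sum>v\<in>S. f v) = (b - 1) * int (card S) + int (card {v\<in>S. f v = b})"
proof -
  have "(\<Sum>v\<in>S. f v) = (\<Sum>v\<in>S. (b - 1) + (if f v = b then 1 else 0))"
    using r by (intro sum.cong) auto
  also have "\<dots> = (b - 1) * int (card S) + (\<Sum>v\<in>S. if f v = b then 1 else 0)"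
    by (simp add: sum.distrib)
  also have "(\<Sum>v\<in>S. if f v = b then 1 else 0) = (\<Sum>v\<in>{v\<in>S. f v = b}. (1::int))"
    by (simp only: sum.inter_filter[OF S])
  finally show ?thesis by simp
qed

lemma ge_lemma:
  fixes f :: "'v \<Rightarrow> int"
  assumes S: "finite S" and le: "\<forall>v\<in>S. f v \<le> b"
    and sm: "(\<Sum>v\<in>S. f v) \<ge> (b - 1) * int (card S) + int (card {v\<in>S. f v = b})"
  shows "\<forall>v\<in>S. b - 1 \<le> f v"
proof (rule ccontr)
  assume "\<not> (\<forall>v\<in>S. b - 1 \<le> f v)"
  then obtain v0 where v0: "v0 \<in> S" "f v0 < b - 1" by auto
  have l1: "\<forall>v\<in>S. f v \<le> (b - 1) + (if f v = b then 1 else 0)" using le by force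
  have l2: "\<exists>a\<in>S. f a < (b - 1) + (if f a = b then 1 else 0)" using v0 by (intro bexI[of _ v0]) auto
  have "(\<Sum>v\<in>S. f v) < (\<Sum>v\<in>S. (b - 1) + (if f v = b then 1 else 0))"
    using sum_strict_mono_ex1[OF S l1 l2] .
  also have "\<dots> = (b - 1) * int (card S) + (\<Sum>v\<in>S. if f v = b then 1 else 0)"
    by (simp add: sum.distrib)
  also have "(\<Sum>v\<in>S. if f v = b then 1 else 0) = (\<Sum>v\<in>{v\<in>S. f v = b}. (1::int))"
    by (simp only: sum.inter_filter[OF S])
  finally show False using sm by simp
qed

lemma mset_range_eq:
  fixes f g :: "'v \<Rightarrow> int"
  assumes S: "finite S" and rf: "\<forall>v\<in>S. b - 1 \<le> f v \<and> f v \<le> b"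
    and rg: "\<forall>v\<in>S. b - 1 \<le> g v \<and> g v \<le> b"
    and sm: "(\<Sum>v\<in>S. f v) = (\<Sum>v\<in>S. g v)"
  shows "image_mset f (mset_set S) = image_mset g (mset_set S)"
proof (rule multiset_eqI)
  fix y
  have cb: "card {v\<in>S. f v = b} = card {v\<in>S. g v = b}"
    using sum_range[OF S rf] sum_range[OF S rg] sm by simp
  have "card {v\<in>S. f v = y} = card {v\<in>S. g v = y}"
  proof (cases "y = b")
    case True then show ?thesis using cb by simp
  next
    case False
    note yb = False
    show ?thesis
    proof (cases "y = b - 1")
      case True
      have "{v\<in>S. f v = y} = S - {v\<in>S. f v = b}" "{v\<in>S. g v = y} = S - {v\<in>S. g v = b}"
        using rf rg True by force+
      then show ?thesis using cb S by (simp add: card_Diff_subset)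
    next
      case False
      have e1: "{v\<in>S. f v = y} = {}" and e2: "{v\<in>S. g v = y} = {}"
        using rf rg False yb by force+
      show ?thesis unfolding e1 e2 by simp
    qed
  qed
  then show "count (image_mset f (mset_set S)) y = count (image_mset g (mset_set S)) y"
    by (simp add: count_img S)
qed

context dm begin

definition cond :: "('e \<Rightarrow> 'v) \<Rightarrow> nat \<Rightarrow> bool" where
  "cond h k \<longleftrightarrow> indeg_set E ends h (C (Suc k)) = 0 \<and>
     (\<forall>v\<in>C (Suc k) - C k. bt k - 1 \<le> indeg E h v \<and> indeg E h v \<le> bt k)"

lemma m_eq: "v \<in> V \<Longrightarrow> m v = indeg E h0 v"
  unfolding indeg_vec_def by simp

lemma sumC_rel:
  assumes or: "is_orientation E ends h"
  shows "(\<Sum>v\<in>C i. indeg E h v) = (\<Sum>v\<in>C i. m v) + int (indeg_set E ends h (C i))"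
proof -
  have "(\<Sum>v\<in>C i. m v) = (\<Sum>v\<in>C i. indeg E h0 v)"
    using C_sub m_eq by (intro sum.cong) auto
  also have "\<dots> = int (inner (C i))"
    using sum_indeg[OF or0 finC] closed_iff C_closed by simp
  finally show ?thesis using sum_indeg[OF or finC] by simp
qed

lemma sumC_eq:
  assumes or: "is_orientation E ends h" and c: "\<forall>j<k. cond h j"
  shows "(\<Sum>v\<in>C k. indeg E h v) = (\<Sum>v\<in>C k. m v)"
proof (cases k)
  case 0 then show ?thesis by simp
next
  case (Suc j)
  then have "indeg_set E ends h (C k) = 0" using c unfolding cond_def by simp
  then show ?thesis using sumC_rel[OF or] by simp
qed

lemma mset_upto:
  assumes or: "is_orientation E ends h"
  shows "k \<le> q \<Longrightarrow> \<forall>j<k. cond h j \<Longrightarrow>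
    image_mset (indeg E h) (mset_set (C k)) = image_mset m (mset_set (C k))"
proof (induction k)
  case 0 then show ?case by simp
next
  case (Suc k)
  have kq: "k < q" using Suc.prems by simp
  have sub: "C k \<subseteq> C (Suc k)" using C_mono C_lt_q kq by blast
  define S where "S = C (Suc k) - C k"
  have un: "C (Suc k) = C k \<union> S" "C k \<inter> S = {}" using sub unfolding S_def by auto
  have finS: "finite S" unfolding S_def using finC by simp
  have IH: "image_mset (indeg E h) (mset_set (C k)) = image_mset m (mset_set (C k))"
    using Suc by simp
  have rf: "\<forall>v\<in>S. bt k - 1 \<le> indeg E h v \<and> indeg E h v \<le> bt k"
    using Suc.prems(2) unfolding cond_def S_def by simp
  have rg: "\<forall>v\<in>S. bt k - 1 \<le> m v \<and> m v \<le> bt k"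
    using m_range kq unfolding S_def by blast
  have s1: "(\<Sum>v\<in>C (Suc k). indeg E h v) = (\<Sum>v\<in>C (Suc k). m v)"
    using sumC_eq[OF or Suc.prems(2)] .
  have s0: "(\<Sum>v\<in>C k. indeg E h v) = (\<Sum>v\<in>C k. m v)"
    using sumC_eq[OF or] Suc.prems(2) by simp
  have "(\<Sum>v\<in>S. indeg E h v) = (\<Sum>v\<in>S. m v)"
    unfolding S_def using s0 s1 sub finC by (simp add: sum_diff)
  then have MS: "image_mset (indeg E h) (mset_set S) = image_mset m (mset_set S)"
    using mset_range_eq[OF finS rf rg] by simp
  show ?case unfolding un(1) using mset_set_Union[OF finC finS un(2)] IH MS by simp
qed

lemma step_cond:
  assumes or: "is_orientation E ends h"
    and MV: "image_mset (indeg E h) (mset_set V) = image_mset m (mset_set V)"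
    and kq: "k < q" and c: "\<forall>j<k. cond h j"
  shows "cond h k"
proof -
  let ?f = "indeg E h"
  have MC: "image_mset ?f (mset_set (C k)) = image_mset m (mset_set (C k))"
    using mset_upto[OF or] kq c by simp
  have sub: "C k \<subseteq> C (Suc k)" using C_mono C_lt_q kq by blast
  define W where "W = V - C k"
  define S where "S = C (Suc k) - C k"
  define b where "b = bt k"
  have finW: "finite W" unfolding W_def using finV by simp
  have finS: "finite S" unfolding S_def using finC by simp
  have SW: "S \<subseteq> W" unfolding S_def W_def using C_sub by blast
  have VU: "V = C k \<union> W" "C k \<inter> W = {}" unfolding W_def using C_sub by auto
  have MW: "image_mset ?f (mset_set W) = image_mset m (mset_set W)"
    using MV MC mset_set_Union[OF finC finW VU(2), unfolded VU(1)[symmetric]] by simp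
  have fle: "\<forall>w\<in>W. ?f w \<le> b"
  proof
    fix w assume w: "w \<in> W"
    then have "?f w \<in># image_mset ?f (mset_set W)" using finW by simp
    then have "?f w \<in> m ` W" using MW finW by simp
    then show "?f w \<le> b" unfolding b_def W_def using finV by auto
  qed
  have cW: "card {w\<in>W. ?f w = b} = card {w\<in>W. m w = b}"
    using arg_cong[OF MW, of "\<lambda>M. count M b"] by (simp add: count_img finW)
  have eqS: "{w\<in>W. m w = b} = {w\<in>S. m w = b}"
    using tops SW unfolding W_def S_def b_def by force
  have "card {v\<in>S. ?f v = b} \<le> card {w\<in>W. ?f w = b}"
    using SW finW by (intro card_mono) auto
  then have cle: "card {v\<in>S. ?f v = b} \<le> card {v\<in>S. m v = b}" using cW eqS by simp
  have rg: "\<forall>v\<in>S. b - 1 \<le> m v \<and> m v \<le> b"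
    using m_range kq unfolding S_def b_def by blast
  have s0: "(\<Sum>v\<in>C k. ?f v) = (\<Sum>v\<in>C k. m v)"
    using sumC_eq[OF or c] .
  have s1: "(\<Sum>v\<in>C (Suc k). ?f v) = (\<Sum>v\<in>C (Suc k). m v) + int (indeg_set E ends h (C (Suc k)))"
    using sumC_rel[OF or] .
  have dS: "(\<Sum>v\<in>S. ?f v) = (\<Sum>v\<in>S. m v) + int (indeg_set E ends h (C (Suc k)))"
    unfolding S_def using s0 s1 sub finC by (simp add: sum_diff)
  have smS: "(\<Sum>v\<in>S. m v) = (b - 1) * int (card S) + int (card {v\<in>S. m v = b})"
    using sum_range[OF finS rg] .
  have geS: "(\<Sum>v\<in>S. ?f v) \<ge> (b - 1) * int (card S) + int (card {v\<in>S. ?f v = b})"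
    using dS smS cle by simp
  have fleS: "\<forall>v\<in>S. ?f v \<le> b" using fle SW by blast
  have fge: "\<forall>v\<in>S. b - 1 \<le> ?f v" using ge_lemma[OF finS fleS geS] .
  have rf: "\<forall>v\<in>S. b - 1 \<le> ?f v \<and> ?f v \<le> b" using fge fleS by blast
  have "(\<Sum>v\<in>S. ?f v) = (b - 1) * int (card S) + int (card {v\<in>S. ?f v = b})"
    using sum_range[OF finS rf] .
  then have "indeg_set E ends h (C (Suc k)) = 0" using dS smS cle by simp
  then show ?thesis unfolding cond_def using rf unfolding S_def b_def by simp
qed

end

context dm begin

lemma all_cond:
  assumes or: "is_orientation E ends h"
    and MV: "image_mset (indeg E h) (mset_set V) = image_mset m (mset_set V)"
  shows "k \<le> q \<Longrightarrow> \<forall>j<k. cond h j"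
proof (induction k)
  case 0 then show ?case by simp
next
  case (Suc k)
  then have "\<forall>j<k. cond h j" by simp
  moreover have "cond h k" using step_cond[OF or MV] Suc.prems calculation by simp
  ultimately show ?case using less_Suc_eq by blast
qed

lemma vec_mset: "image_mset (indeg_vec V E h) (mset_set V) = image_mset (indeg E h) (mset_set V)"
  using finV by (intro image_mset_cong) (simp add: indeg_vec_def)

lemma main_dm:
  assumes or: "is_orientation E ends h"
  shows "dec_min V K (indeg_vec V E h) \<longleftrightarrow> (\<forall>k<q. cond h k)"
proof
  assume dh: "dec_min V K (indeg_vec V E h)"
  have mK: "m \<in> K" and n1: "\<not> dec_smaller V (indeg_vec V E h) m"
    using dmin dh unfolding dec_min_def by auto
  have n2: "\<not> dec_smaller V m (indeg_vec V E h)" using dh mK unfolding dec_min_def by auto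
  have lin: "\<forall>a b. (a, b) \<in> {(a::int, b). a < b} \<or> a = b \<or> (b, a) \<in> {(a::int, b). a < b}" by auto
  have "dec_seq V (indeg_vec V E h) = dec_seq V m"
    using lexord_linear[OF lin, of "dec_seq V (indeg_vec V E h)" "dec_seq V m"] n1 n2
    unfolding dec_smaller_def by blast
  then have "mset (dec_seq V (indeg_vec V E h)) = mset (dec_seq V m)" by simp
  then have "image_mset (indeg_vec V E h) (mset_set V) = image_mset m (mset_set V)"
    unfolding dec_seq_dsort by simp
  then have MV: "image_mset (indeg E h) (mset_set V) = image_mset m (mset_set V)"
    using vec_mset by simp
  show "\<forall>k<q. cond h k" using all_cond[OF or MV, of q] by simp
next
  assume c: "\<forall>k<q. cond h k"
  have "image_mset (indeg E h) (mset_set (C q)) = image_mset m (mset_set (C q))"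
    using mset_upto[OF or] c by simp
  then have "image_mset (indeg_vec V E h) (mset_set V) = image_mset m (mset_set V)"
    using Cq vec_mset by simp
  then have ds: "dec_seq V (indeg_vec V E h) = dec_seq V m"
    unfolding dec_seq_dsort by simp
  show "dec_min V K (indeg_vec V E h)"
    using dmin vec_in[OF or] unfolding dec_min_def dec_smaller_def ds by simp
qed

lemma rhs_iff:
  "((\<forall>i\<in>{1..canon_q V K m}. indeg_set E ends h (C i) = 0) \<and>
     (\<forall>i\<in>{1..canon_q V K m}. \<forall>v\<in>canon_S V K m i.
          canon_beta V K m i - 1 \<le> indeg E h v \<and> indeg E h v \<le> canon_beta V K m i))
   \<longleftrightarrow> (\<forall>k<q. cond h k)"
proof
  assume a: "(\<forall>i\<in>{1..canon_q V K m}. indeg_set E ends h (C i) = 0) \<and>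
     (\<forall>i\<in>{1..canon_q V K m}. \<forall>v\<in>canon_S V K m i.
          canon_beta V K m i - 1 \<le> indeg E h v \<and> indeg E h v \<le> canon_beta V K m i)"
  show "\<forall>k<q. cond h k"
  proof (intro allI impI)
    fix k assume k: "k < q"
    then have i: "Suc k \<in> {1..canon_q V K m}" unfolding q_def by simp
    have a1: "indeg_set E ends h (C (Suc k)) = 0" using a i by blast
    have a2: "\<forall>v\<in>canon_S V K m (Suc k). canon_beta V K m (Suc k) - 1 \<le> indeg E h v \<and> indeg E h v \<le> canon_beta V K m (Suc k)"
      using a i by blast
    have e1: "canon_S V K m (Suc k) = C (Suc k) - C k" by (simp add: canon_S_def)
    have e2: "canon_beta V K m (Suc k) = bt k" by (simp add: canon_beta_def)
    show "cond h k" unfolding cond_def using a1 a2 unfolding e1 e2 by blast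
  qed
next
  assume c: "\<forall>k<q. cond h k"
  have "\<forall>i\<in>{1..canon_q V K m}. indeg_set E ends h (C i) = 0 \<and> (\<forall>v\<in>canon_S V K m i.
          canon_beta V K m i - 1 \<le> indeg E h v \<and> indeg E h v \<le> canon_beta V K m i)"
  proof
    fix i assume i: "i \<in> {1..canon_q V K m}"
    then obtain k where ik: "i = Suc k" "k < q" unfolding q_def by (cases i) auto
    have ck: "cond h k" using c ik by blast
    have e1: "canon_S V K m (Suc k) = C (Suc k) - C k" by (simp add: canon_S_def)
    have e2: "canon_beta V K m (Suc k) = bt k" by (simp add: canon_beta_def)
    show "indeg_set E ends h (C i) = 0 \<and> (\<forall>v\<in>canon_S V K m i.
          canon_beta V K m i - 1 \<le> indeg E h v \<and> indeg E h v \<le> canon_beta V K m i)"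
      using ck unfolding ik(1) e1 e2 cond_def by blast
  qed
  then show "(\<forall>i\<in>{1..canon_q V K m}. indeg_set E ends h (C i) = 0) \<and>
     (\<forall>i\<in>{1..canon_q V K m}. \<forall>v\<in>canon_S V K m i.
          canon_beta V K m i - 1 \<le> indeg E h v \<and> indeg E h v \<le> canon_beta V K m i)" by blast
qed

end

theorem theorem4p7:
  fixes V :: "'v set" and E :: "'e set" and ends :: "'e \<Rightarrow> 'v \<times> 'v"
    and h :: "'e \<Rightarrow> 'v" and m :: "'v \<Rightarrow> int"
  assumes "finite V" and "finite E"
    and "\<forall>e\<in>E. fst (ends e) \<in> V \<and> snd (ends e) \<in> V"
    and "is_orientation E ends h"
    and "dec_min V (indeg_vectors V E ends) m"
  shows "dec_min V (indeg_vectors V E ends) (indeg_vec V E h) \<longleftrightarrow>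
    ((\<forall>i\<in>{1..canon_q V (indeg_vectors V E ends) m}.
        indeg_set E ends h (canon_C V (indeg_vectors V E ends) m i) = 0) \<and>
     (\<forall>i\<in>{1..canon_q V (indeg_vectors V E ends) m}.
        \<forall>v\<in>canon_S V (indeg_vectors V E ends) m i.
          canon_beta V (indeg_vectors V E ends) m i - 1 \<le> indeg E h v \<and>
          indeg E h v \<le> canon_beta V (indeg_vectors V E ends) m i))"
proof -
  from assms(5) have "m \<in> indeg_vectors V E ends" unfolding dec_min_def by simp
  then obtain h0 where or0: "is_orientation E ends h0" and mh: "m = indeg_vec V E h0"
    unfolding indeg_vectors_def by blast
  interpret dm V E ends h0
    using assms or0 mh by unfold_locales auto
  show ?thesis unfolding mh using main_dm[OF assms(4)] rhs_iff[of h] by simp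
qed

end
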